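(* For every $\bar g\in W$, $$T\!\left(\frac{\delta\bar g}{\delta u}\right)=\sum_{a,b\in\mathbb{Z}}\frac{\partial\bar g}{\partial p^a_b}\,e^{-i(ay+bx)}.$$
   Context: Let $u_{k_1,k_2}$ ($k_1,k_2\ge0$), $p^a_b$ ($a,b\in\mathbb{Z}$), $\epsilon$, $e^{\pm ix}$, $e^{\pm iy}$ be formal variables. Let $T:\mathbb{C}[[u_{\star,\star},\epsilon]]\to\mathbb{C}[[p^\star_\star,e^{\pm ix},e^{\pm iy},\epsilon]]$ be the ($\epsilon$-linear, multiplicative, continuous) map with $u_{k_1,k_2}\mapsto\partial_x^{k_1}\partial_y^{k_2}\big(\sum_{a,b}p^a_b e^{i(ay+bx)}\big)$, where $\partial_x,\partial_y$ act on $e^{i(ay+bx)}$ as derivatives in $x,y$. For $G$ in the target, $\bar G\in\mathbb{C}[[p^\star_\star,\epsilon]]$ denotes its coefficient of $e^{i0}$. Set $T_0(f)=\overline{T(f)}$ and $W=\mathrm{image}(T_0)$. Define derivations on $\mathbb{C}[[u_{\star,\star},\epsilon]]$ by $\partial_x f=\sum_{k_1,k_2\ge0}u_{k_1+1,k_2}\frac{\partial f}{\partial u_{k_1,k_2}}$ and $\partial_y f=\sum_{k_1,k_2\ge0}u_{k_1,k_2+1}\frac{\partial f}{\partial u_{k_1,k_2}}$. For $\bar g\in W$ choose $f$ with $T_0(f)=\bar g$ and define the variational derivative $\frac{\delta\bar g}{\delta u}=\sum_{k_1,k_2\ge0}(-1)^{k_1+k_2}\partial_x^{k_1}\partial_y^{k_2}\frac{\partial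 f}{\partial u_{k_1,k_2}}$ (independent of the choice of $f$). *)

theory Defs
  imports "HOL-Analysis.Analysis" "HOL-Library.Poly_Mapping" "HOL-Library.Product_Plus"
begin

text \<open>A monomial in the variables u_{k1,k2} is a finitely supported map
  (k1,k2) |-> exponent.  An element f of C[[u_{*,*},eps]] is given by its coefficients:
  f M n is the coefficient of the monomial M * eps^n.\<close>

type_synonym umono = "(nat \<times> nat) \<Rightarrow>\<^sub>0 nat"
type_synonym useries = "umono \<Rightarrow> nat \<Rightarrow> complex"

definition udeg :: "umono \<Rightarrow> nat" where
  "udeg M = (\<Sum>k\<in>Poly_Mapping.keys M. Poly_Mapping.lookup M k)"

text \<open>Power series in infinitely many variables: completion of the polynomial ring
  with respect to the degree filtration, i.e. only finitely many monomials of each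
  degree carry a nonzero coefficient.  (This is exactly what makes T continuous.)\<close>

definition useries_ok :: "useries \<Rightarrow> bool" where
  "useries_ok f \<longleftrightarrow> (\<forall>d n. finite {M. udeg M = d \<and> f M n \<noteq> 0})"

definition du :: "nat \<times> nat \<Rightarrow> useries \<Rightarrow> useries" where
  "du k f = (\<lambda>M n. of_nat (Poly_Mapping.lookup M k + 1) * f (M + Poly_Mapping.single k 1) n)"

definition umulvar :: "nat \<times> nat \<Rightarrow> useries \<Rightarrow> useries" where
  "umulvar j g = (\<lambda>M n. if 0 < Poly_Mapping.lookup M j then g (M - Poly_Mapping.single j 1) n else 0)"

definition dx :: "useries \<Rightarrow> useries" where
  "dx f = (\<lambda>M n. \<Sum>\<^sub>\<infinity>k. umulvar (fst k + 1, snd k) (du k f) M n)"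

definition dy :: "useries \<Rightarrow> useries" where
  "dy f = (\<lambda>M n. \<Sum>\<^sub>\<infinity>k. umulvar (fst k, snd k + 1) (du k f) M n)"

text \<open>variational derivative computed from the representative f:
  sum_{k1,k2} (-1)^(k1+k2) partial_x^k1 partial_y^k2 (df/du_{k1,k2})\<close>
definition vard :: "useries \<Rightarrow> useries" where
  "vard f = (\<lambda>M n. \<Sum>\<^sub>\<infinity>k. (-1) ^ (fst k + snd k) * (dx ^^ fst k) ((dy ^^ snd k) (du k f)) M n)"

text \<open>A monomial in the p^a_b is a finitely supported map (a,b) |-> exponent.
  Coefficients (of p-monomial times eps^n) are Laurent polynomials in e^{ix}, e^{iy};
  the key (al,be) stands for e^{i(al*y + be*x)}.\<close>

type_synonym pmono = "(int \<times> int) \<Rightarrow>\<^sub>0 nat"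
type_synonym lpoly = "(int \<times> int) \<Rightarrow>\<^sub>0 complex"
type_synonym tseries = "pmono \<Rightarrow> nat \<Rightarrow> lpoly"

definition pdeg :: "pmono \<Rightarrow> nat" where
  "pdeg m = (\<Sum>k\<in>Poly_Mapping.keys m. Poly_Mapping.lookup m k)"

definition tmul :: "tseries \<Rightarrow> tseries \<Rightarrow> tseries" where
  "tmul F G = (\<lambda>m n. \<Sum>(q, r)\<in>{(q, r). q + r = m}. \<Sum>j\<le>n. F q j * G r (n - j))"

definition tone :: tseries where
  "tone = (\<lambda>m n. if m = 0 \<and> n = 0 then 1 else 0)"

primrec tpow :: "tseries \<Rightarrow> nat \<Rightarrow> tseries" where
  "tpow F 0 = tone"
| "tpow F (Suc j) = tmul F (tpow F j)"

text \<open>T(u_{k1,k2}) = partial_x^k1 partial_y^k2 (sum_{a,b} p^a_b e^{i(ay+bx)})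
   = sum_{a,b} (i b)^k1 (i a)^k2 p^a_b e^{i(ay+bx)}\<close>
definition Tu :: "nat \<times> nat \<Rightarrow> tseries" where
  "Tu k = (\<lambda>m n. if n = 0 \<and> (\<exists>ab. m = Poly_Mapping.single ab 1)
     then (case (THE ab. m = Poly_Mapping.single ab 1) of (a, b) \<Rightarrow>
             Poly_Mapping.single (a, b) ((\<i> * of_int b) ^ fst k * (\<i> * of_int a) ^ snd k))
     else 0)"

text \<open>T of the monomial M * eps^n' (T is multiplicative and eps-linear)\<close>
definition Tmono :: "umono \<Rightarrow> nat \<Rightarrow> tseries" where
  "Tmono M n' = (\<lambda>m n. if n = n' then
      Finite_Set.fold (\<lambda>k acc. tmul (tpow (Tu k) (Poly_Mapping.lookup M k)) acc) tone (Poly_Mapping.keys M) m 0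
    else 0)"

text \<open>T f, extended by continuity (coefficientwise sum over monomials).
  T f m n e is the coefficient of m * eps^n * e^{i(al*y+be*x)}, e = (al,be).\<close>
definition T :: "useries \<Rightarrow> pmono \<Rightarrow> nat \<Rightarrow> int \<times> int \<Rightarrow> complex" where
  "T f = (\<lambda>m n e. \<Sum>\<^sub>\<infinity>M. f M n * Poly_Mapping.lookup (Tmono M n m n) e)"

definition T0 :: "useries \<Rightarrow> pmono \<Rightarrow> nat \<Rightarrow> complex" where
  "T0 f = (\<lambda>m n. T f m n (0, 0))"

definition dp :: "int \<times> int \<Rightarrow> (pmono \<Rightarrow> nat \<Rightarrow> complex) \<Rightarrow> pmono \<Rightarrow> nat \<Rightarrow> complex" where
  "dp ab g = (\<lambda>m n. of_nat (Poly_Mapping.lookup m ab + 1) * g (m + Poly_Mapping.single ab 1) n)"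

end

theory Submission
  imports Defs
begin

lemma lookup_single_mult:
  fixes X :: "('k::ab_group_add) \<Rightarrow>\<^sub>0 ('c::comm_semiring_1)"
  shows "Poly_Mapping.lookup (Poly_Mapping.single a c * X) b = c * Poly_Mapping.lookup X (b - a)"
proof -
  have "Poly_Mapping.lookup (Poly_Mapping.single a c * X) b
      = (\<Sum>l. (c when a = l) * (\<Sum>q. Poly_Mapping.lookup X q when b = l + q))"
    by (simp add: lookup_mult lookup_single)
  also have "\<dots> = (\<Sum>l. (c * (\<Sum>q. Poly_Mapping.lookup X q when b = l + q)) when a = l)"
    by (simp add: when_mult)
  also have "\<dots> = c * (\<Sum>q. Poly_Mapping.lookup X q when b = a + q)"
    by simp
  also have "(\<Sum>q. Poly_Mapping.lookup X q when b = a + q) = (\<Sum>q. Poly_Mapping.lookup X q when q = b - a)"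
    by (rule Sum_any.cong) (auto simp: when_def algebra_simps)
  also have "\<dots> = Poly_Mapping.lookup X (b - a)" by simp
  finally show ?thesis .
qed

definition lin :: "('a \<Rightarrow> 'c::comm_semiring_1) \<Rightarrow> ('a \<Rightarrow>\<^sub>0 nat) \<Rightarrow> 'c" where
  "lin \<phi> M = (\<Sum>k\<in>Poly_Mapping.keys M. of_nat (Poly_Mapping.lookup M k) * \<phi> k)"

lemma lin_superset:
  assumes "finite K" "Poly_Mapping.keys M \<subseteq> K"
  shows "lin \<phi> M = (\<Sum>k\<in>K. of_nat (Poly_Mapping.lookup M k) * \<phi> k)"
  unfolding lin_def
  by (rule sum.mono_neutral_left) (use assms in \<open>auto simp: in_keys_iff\<close>)

lemma keys_add_nat: "Poly_Mapping.keys (M + N :: 'a \<Rightarrow>\<^sub>0 nat) = Poly_Mapping.keys M \<union> Poly_Mapping.keys N"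
  by (auto simp: in_keys_iff lookup_add)

lemma lin_add: "lin \<phi> (M + N) = lin \<phi> M + lin \<phi> N"
proof -
  let ?K = "Poly_Mapping.keys M \<union> Poly_Mapping.keys N"
  have "lin \<phi> (M + N) = (\<Sum>k\<in>?K. of_nat (Poly_Mapping.lookup (M+N) k) * \<phi> k)"
    by (rule lin_superset) (auto simp: keys_add_nat)
  also have "\<dots> = (\<Sum>k\<in>?K. of_nat (Poly_Mapping.lookup M k) * \<phi> k) + (\<Sum>k\<in>?K. of_nat (Poly_Mapping.lookup N k) * \<phi> k)"
    by (simp add: lookup_add distrib_right sum.distrib)
  also have "\<dots> = lin \<phi> M + lin \<phi> N"
    by (simp add: lin_superset[symmetric])
  finally show ?thesis .
qed

lemma lin_single: "lin \<phi> (Poly_Mapping.single k 1) = \<phi> k"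
  by (simp add: lin_def)

lemma lin_zero[simp]: "lin \<phi> 0 = 0"
  by (simp add: lin_def)

lemma sub_add_single:
  assumes "0 < Poly_Mapping.lookup (M :: 'a \<Rightarrow>\<^sub>0 nat) k"
  shows "M - Poly_Mapping.single k 1 + Poly_Mapping.single k 1 = M"
  by (rule poly_mapping_eqI) (use assms in \<open>auto simp: lookup_add lookup_minus lookup_single when_def\<close>)

lemma add_sub_single[simp]:
  "(M :: 'a \<Rightarrow>\<^sub>0 nat) + Poly_Mapping.single k 1 - Poly_Mapping.single k 1 = M"
  by simp

lemma lin_diff:
  assumes "0 < Poly_Mapping.lookup (M :: 'a \<Rightarrow>\<^sub>0 nat) k"
  shows "lin \<phi> (M - Poly_Mapping.single k 1) + \<phi> k = lin \<phi> M"
  by (metis lin_add lin_single sub_add_single[OF assms])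

lemma udeg_lin: "udeg M = lin (\<lambda>_. 1) M"
  by (simp add: udeg_def lin_def)

lemma pdeg_lin: "pdeg M = lin (\<lambda>_. 1) M"
  by (simp add: pdeg_def lin_def)

lemma pm_induct[case_names zero step]:
  assumes "P 0" "\<And>M k. P M \<Longrightarrow> P (M + Poly_Mapping.single k 1)"
  shows "P (N :: 'a \<Rightarrow>\<^sub>0 nat)"
proof (induction "lin (\<lambda>_. 1::nat) N" arbitrary: N rule: less_induct)
  case less
  show ?case
  proof (cases "N = 0")
    case True then show ?thesis using assms(1) by simp
  next
    case False
    then obtain k where k: "k \<in> Poly_Mapping.keys N"
      by (metis keys_eq_empty all_not_in_conv)
    then have pos: "0 < Poly_Mapping.lookup N k" by (simp add: in_keys_iff)
    have "lin (\<lambda>_. 1::nat) (N - Poly_Mapping.single k 1) < lin (\<lambda>_. 1) N"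
      using lin_diff[OF pos, of "\<lambda>_. 1::nat"] by simp
    then have "P (N - Poly_Mapping.single k 1)" by (rule less)
    then have "P (N - Poly_Mapping.single k 1 + Poly_Mapping.single k 1)" by (rule assms(2))
    then show ?thesis unfolding sub_add_single[OF pos] .
  qed
qed

lemma finite_bounded_pm:
  assumes "finite K"
  shows "finite {M :: 'a \<Rightarrow>\<^sub>0 nat. Poly_Mapping.keys M \<subseteq> K \<and> (\<forall>k. Poly_Mapping.lookup M k \<le> B k)}"
    (is "finite ?S")
proof -
  have inj: "inj_on (\<lambda>M. restrict (Poly_Mapping.lookup M) K) ?S"
  proof (rule inj_onI)
    fix M N assume M: "M \<in> ?S" and N: "N \<in> ?S" and eq: "restrict (Poly_Mapping.lookup M) K = restrict (Poly_Mapping.lookup N) K"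
    show "M = N"
    proof (rule poly_mapping_eqI)
      fix k show "Poly_Mapping.lookup M k = Poly_Mapping.lookup N k"
      proof (cases "k \<in> K")
        case True then show ?thesis using fun_cong[OF eq, of k] by simp
      next
        case False
        then have "k \<notin> Poly_Mapping.keys M" "k \<notin> Poly_Mapping.keys N" using M N by auto
        then show ?thesis by (simp add: in_keys_iff)
      qed
    qed
  qed
  have sub: "(\<lambda>M. restrict (Poly_Mapping.lookup M) K) ` ?S \<subseteq> PiE K (\<lambda>k. {..B k})"
  proof (rule image_subsetI)
    fix M assume "M \<in> ?S"
    then have "\<forall>k. Poly_Mapping.lookup M k \<le> B k" by blast
    then show "restrict (Poly_Mapping.lookup M) K \<in> PiE K (\<lambda>k. {..B k})"
      unfolding restrict_PiE_iff atMost_iff by blast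
  qed
  have fin: "finite (PiE K (\<lambda>k. {..B k}))"
    using assms by (intro finite_PiE) auto
  have "finite ((\<lambda>M. restrict (Poly_Mapping.lookup M) K) ` ?S)"
    by (rule finite_subset[OF sub fin])
  then show ?thesis by (rule finite_imageD[OF _ inj])
qed

lemma infsum_fin:
  fixes f :: "'a \<Rightarrow> complex"
  assumes "finite S" "\<And>x. f x \<noteq> 0 \<Longrightarrow> x \<in> S"
  shows "infsum f UNIV = sum f S"
proof -
  have "infsum f UNIV = infsum f S"
    by (rule infsum_cong_neutral) (use assms in auto)
  then show ?thesis using assms by simp
qed

lemma infsum_double:
  fixes g :: "'a \<Rightarrow> 'b \<Rightarrow> complex"
  assumes fin: "finite P" and sub: "\<And>a b. g a b \<noteq> 0 \<Longrightarrow> (a, b) \<in> P"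
  shows "(\<Sum>\<^sub>\<infinity>a. \<Sum>\<^sub>\<infinity>b. g a b) = (\<Sum>(a, b)\<in>P. g a b)"
proof -
  define Pa where "Pa a = {b. (a, b) \<in> P}" for a
  have finPa: "finite (Pa a)" for a
  proof -
    have "Pa a \<subseteq> snd ` P" by (force simp: Pa_def)
    then show ?thesis using fin finite_subset by blast
  qed
  have inner: "(\<Sum>\<^sub>\<infinity>b. g a b) = (\<Sum>b\<in>Pa a. g a b)" for a
    by (rule infsum_fin) (use finPa sub in \<open>auto simp: Pa_def\<close>)
  have "(\<Sum>\<^sub>\<infinity>a. \<Sum>\<^sub>\<infinity>b. g a b) = (\<Sum>\<^sub>\<infinity>a. \<Sum>b\<in>Pa a. g a b)"
    by (simp add: inner)
  also have "\<dots> = (\<Sum>a\<in>fst ` P. \<Sum>b\<in>Pa a. g a b)"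
  proof (rule infsum_fin)
    show "finite (fst ` P)" using fin by simp
    fix a assume "(\<Sum>b\<in>Pa a. g a b) \<noteq> 0"
    then obtain b where "b \<in> Pa a" by (meson sum.neutral)
    then show "a \<in> fst ` P" by (force simp: Pa_def)
  qed
  also have "\<dots> = (\<Sum>(a, b)\<in>Sigma (fst ` P) Pa. g a b)"
    by (rule sum.Sigma) (use fin finPa in auto)
  also have "Sigma (fst ` P) Pa = P" by (force simp: Pa_def)
  finally show ?thesis .
qed

lemma infsum_double':
  fixes g :: "'a \<Rightarrow> 'b \<Rightarrow> complex"
  assumes fin: "finite P" and sub: "\<And>a b. g a b \<noteq> 0 \<Longrightarrow> (a, b) \<in> P"
  shows "(\<Sum>\<^sub>\<infinity>b. \<Sum>\<^sub>\<infinity>a. g a b) = (\<Sum>(a, b)\<in>P. g a b)"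
proof -
  have "(\<Sum>\<^sub>\<infinity>b. \<Sum>\<^sub>\<infinity>a. g a b) = (\<Sum>(b, a)\<in>prod.swap ` P. g a b)"
  proof (rule infsum_double)
    show "finite (prod.swap ` P)" using fin by simp
    fix b a assume "g a b \<noteq> 0"
    then have "(a, b) \<in> P" by (rule sub)
    then show "(b, a) \<in> prod.swap ` P" by (metis image_eqI prod.swap_def fst_conv snd_conv)
  qed
  also have "\<dots> = (\<Sum>(a, b)\<in>P. g a b)"
    by (subst sum.reindex) (auto simp: inj_on_def case_prod_beta)
  finally show ?thesis .
qed

definition conv :: "('a::comm_monoid_add \<Rightarrow> 'b::comm_semiring_1) \<Rightarrow> ('a \<Rightarrow> 'b) \<Rightarrow> 'a \<Rightarrow> 'b" where
  "conv A B x = (\<Sum>p\<in>{(y, z). y + z = x}. A (fst p) * B (snd p))"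

lemma conv_comm: "conv A B x = conv B A x"
  unfolding conv_def
  by (rule sum.reindex_bij_witness[of _ prod.swap prod.swap]) (auto simp: add.commute mult.commute)

lemma conv_assoc:
  fixes A B C :: "'a::comm_monoid_add \<Rightarrow> 'b::comm_semiring_1"
  assumes fin: "\<And>x::'a. finite {(y, z). y + z = x}"
  shows "conv (conv A B) C x = conv A (conv B C) x"
proof -
  let ?D = "\<lambda>x::'a. {(y, z). y + z = x}"
  have "conv (conv A B) C x = (\<Sum>p\<in>?D x. \<Sum>q\<in>?D (fst p). A (fst q) * B (snd q) * C (snd p))"
    unfolding conv_def by (simp add: sum_distrib_right)
  also have "\<dots> = (\<Sum>pq\<in>Sigma (?D x) (\<lambda>p. ?D (fst p)). A (fst (snd pq)) * B (snd (snd pq)) * C (snd (fst pq)))"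
    apply (subst sum.Sigma)
      apply (rule fin)
     apply (blast intro: fin)
    apply (simp add: case_prod_beta)
    done
  also have "\<dots> = (\<Sum>pq\<in>Sigma (?D x) (\<lambda>p. ?D (snd p)). A (fst (fst pq)) * (B (fst (snd pq)) * C (snd (snd pq))))"
    by (rule sum.reindex_bij_witness[of _ "\<lambda>((a, t), (b, c)). ((a + b, c), (a, b))" "\<lambda>((s, c), (a, b)). ((a, b + c), (b, c))"])
       (auto simp: add.assoc mult.assoc)
  also have "\<dots> = (\<Sum>p\<in>?D x. \<Sum>q\<in>?D (snd p). A (fst p) * (B (fst q) * C (snd q)))"
    apply (subst sum.Sigma)
      apply (rule fin)
     apply (blast intro: fin)
    apply (simp add: case_prod_beta)
    done
  also have "\<dots> = conv A (conv B C) x"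
    unfolding conv_def by (simp add: sum_distrib_left)
  finally show ?thesis .
qed

lemma conv_delta:
  fixes A :: "'a::comm_monoid_add \<Rightarrow> 'b::comm_semiring_1"
  assumes fin: "\<And>x::'a. finite {(y, z). y + z = x}"
  shows "conv A (\<lambda>z. if z = 0 then c else 0) x = A x * c"
proof -
  have "(x, 0) \<in> {(y, z). y + z = x}" by simp
  then have "conv A (\<lambda>z. if z = 0 then c else 0) x = A x * c + (\<Sum>p\<in>{(y, z). y + z = x} - {(x, 0)}. A (fst p) * (if snd p = 0 then c else 0))"
    unfolding conv_def using fin by (subst sum.remove[where x="(x, 0)"]) auto
  also have "(\<Sum>p\<in>{(y, z). y + z = x} - {(x, 0)}. A (fst p) * (if snd p = 0 then c else 0)) = 0"
    by (rule sum.neutral) auto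
  finally show ?thesis by simp
qed

lemma finite_decomp_pm: "finite {(q, r). q + r = (m :: 'a \<Rightarrow>\<^sub>0 nat)}"
proof -
  let ?S = "{q :: 'a \<Rightarrow>\<^sub>0 nat. Poly_Mapping.keys q \<subseteq> Poly_Mapping.keys m \<and> (\<forall>k. Poly_Mapping.lookup q k \<le> Poly_Mapping.lookup m k)}"
  have "{(q, r). q + r = m} \<subseteq> ?S \<times> ?S"
  proof (rule subsetI)
    fix p assume "p \<in> {(q, r). q + r = m}"
    then obtain q r where p: "p = (q, r)" and m: "m = q + r" by auto
    have "q \<in> ?S" "r \<in> ?S" unfolding m by (auto simp: keys_add_nat lookup_add)
    then show "p \<in> ?S \<times> ?S" using p by simp
  qed
  moreover have "finite (?S \<times> ?S)" using finite_bounded_pm[of "Poly_Mapping.keys m"] by simp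
  ultimately show ?thesis by (rule finite_subset)
qed

lemma finite_decomp_nat: "finite {(j, j'). j + j' = (n::nat)}"
proof -
  have "{(j, j'). j + j' = n} \<subseteq> {..n} \<times> {..n}" by auto
  then show ?thesis by (rule finite_subset) simp
qed

lemma finite_decomp_pmn: "finite {(y, z). y + z = (x :: pmono \<times> nat)}"
proof -
  obtain m n where x: "x = (m, n)" by (cases x)
  have "{(y, z). y + z = x} \<subseteq> (\<lambda>((q, r), (j, j')). ((q, j), (r, j'))) ` ({(q, r). q + r = m} \<times> {(j, j'). j + j' = n})"
  proof
    fix p assume "p \<in> {(y, z). y + z = x}"
    then obtain q j r j' where p: "p = ((q, j), (r, j'))" and "q + r = m" "j + j' = n"
      using x by (cases p) auto
    then show "p \<in> (\<lambda>((q, r), (j, j')). ((q, j), (r, j'))) ` ({(q, r). q + r = m} \<times> {(j, j'). j + j' = n})"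
      by (auto intro!: image_eqI[where x="((q, r), (j, j'))"])
  qed
  moreover have "finite ({(q, r). q + r = m} \<times> {(j, j'). j + j' = n})"
    using finite_decomp_pm finite_decomp_nat by blast
  ultimately show ?thesis using finite_subset by blast
qed

definition unc :: "tseries \<Rightarrow> pmono \<times> nat \<Rightarrow> lpoly" where
  "unc F = (\<lambda>p. F (fst p) (snd p))"

lemma tmul_conv: "tmul F G m n = conv (unc F) (unc G) (m, n)"
proof -
  have "tmul F G m n = (\<Sum>p\<in>{(q, r). q + r = m}. \<Sum>j\<in>{..n}. F (fst p) j * G (snd p) (n - j))"
    unfolding tmul_def by (simp add: case_prod_beta atMost_def)
  also have "\<dots> = (\<Sum>pj\<in>{(q, r). q + r = m} \<times> {..n}. F (fst (fst pj)) (snd pj) * G (snd (fst pj)) (n - snd pj))"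
    by (subst sum.cartesian_product) (simp add: case_prod_beta)
  also have "\<dots> = conv (unc F) (unc G) (m, n)"
    unfolding conv_def unc_def
    by (rule sum.reindex_bij_witness[of _ "\<lambda>((q, j), (r, j')). ((q, r), j)" "\<lambda>((q, r), j). ((q, j), (r, n - j))"])
       auto
  finally show ?thesis .
qed

lemma unc_tmul: "unc (tmul F G) = conv (unc F) (unc G)"
  by (rule ext) (simp add: unc_def tmul_conv)

lemma unc_inj: "unc F = unc G \<Longrightarrow> F = G"
  unfolding unc_def by (metis fst_conv snd_conv ext)

lemma tmul_comm: "tmul F G = tmul G F"
  by (intro ext) (simp add: tmul_conv conv_comm)

lemma tmul_assoc: "tmul (tmul F G) H = tmul F (tmul G H)"
  by (rule unc_inj) (simp add: unc_tmul fun_eq_iff conv_assoc[OF finite_decomp_pmn])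

lemma unc_tone: "unc tone = (\<lambda>z. if z = 0 then 1 else 0)"
  by (auto simp: unc_def tone_def fun_eq_iff zero_prod_def)

lemma tmul_tone: "tmul F tone = F"
  by (rule unc_inj) (simp add: unc_tmul unc_tone conv_delta[OF finite_decomp_pmn] fun_eq_iff)

lemma tmul_left_comm: "tmul F (tmul G H) = tmul G (tmul F H)"
  by (metis tmul_assoc tmul_comm)

lemma tmul_delta: "tmul (\<lambda>m n. if m = 0 \<and> n = 0 then z else 0) G m n = z * G m n"
proof -
  have u: "unc (\<lambda>m n. if m = 0 \<and> n = 0 then z else 0) = (\<lambda>p. if p = 0 then z else 0)"
    by (auto simp: unc_def fun_eq_iff zero_prod_def)
  show ?thesis
    unfolding tmul_conv u by (subst conv_comm) (simp add: conv_delta[OF finite_decomp_pmn] unc_def mult.commute)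
qed

lemma tmul_add_right: "tmul F (\<lambda>m n. A m n + B m n) m n = tmul F A m n + tmul F B m n"
  by (simp add: tmul_def distrib_left sum.distrib case_prod_beta)

lemma tmul_scale_right: "tmul F (\<lambda>m n. c * A m n) m n = c * tmul F A m n"
  by (simp add: tmul_def sum_distrib_left case_prod_beta mult.left_commute)

lemma tmul_zero_right: "tmul F (\<lambda>m n. 0) m n = 0"
  by (simp add: tmul_def)

lemma tmul_sum_right: "tmul F (\<lambda>m n. \<Sum>i\<in>I. c i * G i m n) m n = (\<Sum>i\<in>I. c i * tmul F (G i) m n)"
proof (induction I arbitrary: m n rule: infinite_finite_induct)
  case (infinite I) then show ?case by (simp add: tmul_zero_right)
next
  case empty then show ?case by (simp add: tmul_zero_right)
next
  case (insert i I)
  have "tmul F (\<lambda>m n. \<Sum>i\<in>insert i I. c i * G i m n) m n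
      = tmul F (\<lambda>m n. c i * G i m n + (\<Sum>i\<in>I. c i * G i m n)) m n"
    using insert by simp
  also have "\<dots> = c i * tmul F (G i) m n + (\<Sum>i\<in>I. c i * tmul F (G i) m n)"
    by (simp add: tmul_add_right tmul_scale_right insert.IH)
  finally show ?case using insert by simp
qed

definition cc :: "nat \<times> nat \<Rightarrow> int \<times> int \<Rightarrow> complex" where
  "cc k ab = (\<i> * of_int (snd ab)) ^ fst k * (\<i> * of_int (fst ab)) ^ snd k"

lemma single_one_eq: "Poly_Mapping.single a (1::nat) = Poly_Mapping.single b 1 \<longleftrightarrow> a = b"
proof
  assume "Poly_Mapping.single a (1::nat) = Poly_Mapping.single b 1"
  then have "Poly_Mapping.lookup (Poly_Mapping.single a (1::nat)) a = Poly_Mapping.lookup (Poly_Mapping.single b 1) a"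
    by simp
  then show "a = b" by (simp add: lookup_single when_def split: if_splits)
qed simp

lemma single_Suc0_eq[simp]: "Poly_Mapping.single a (Suc 0) = Poly_Mapping.single b (Suc 0) \<longleftrightarrow> a = b"
  using single_one_eq by simp

lemma lin_single_Suc0[simp]: "lin \<phi> (Poly_Mapping.single k (Suc 0)) = \<phi> k"
  using lin_single by simp

lemma Tu_single: "Tu k (Poly_Mapping.single ab 1) 0 = Poly_Mapping.single ab (cc k ab)"
proof -
  have the: "(THE ab'. Poly_Mapping.single ab (1::nat) = Poly_Mapping.single ab' 1) = ab"
    by (rule the_equality) (auto simp: single_one_eq)
  show ?thesis
    unfolding Tu_def the by (cases ab) (auto simp: cc_def)
qed

lemma Tu_single_Suc0[simp]: "Tu k (Poly_Mapping.single ab (Suc 0)) 0 = Poly_Mapping.single ab (cc k ab)"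
  using Tu_single by simp

lemma Tu_zero: "\<not> (n = 0 \<and> (\<exists>ab. m = Poly_Mapping.single ab 1)) \<Longrightarrow> Tu k m n = 0"
  unfolding Tu_def by auto

definition FF :: "umono \<Rightarrow> tseries" where
  "FF M = Finite_Set.fold (\<lambda>k acc. tmul (tpow (Tu k) (Poly_Mapping.lookup M k)) acc) tone (Poly_Mapping.keys M)"

lemma Tmono_FF: "Tmono M n m n = FF M m 0"
  by (simp add: Tmono_def FF_def)

lemma cfc: "comp_fun_commute (\<lambda>k acc. tmul (tpow (Tu k) (Poly_Mapping.lookup M k)) acc)"
  unfolding comp_fun_commute_def by (simp add: fun_eq_iff tmul_left_comm)

lemma cfc': "comp_fun_commute_on UNIV (\<lambda>k acc. tmul (tpow (Tu k) (Poly_Mapping.lookup M k)) acc)"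
  using cfc by (simp add: comp_fun_commute_def')

lemma FF_0: "FF 0 = tone"
  by (simp add: FF_def)

lemma tpow_1: "tpow X 1 = X"
  by (simp add: tmul_tone)

lemma FF_add: "FF (M + Poly_Mapping.single k 1) = tmul (Tu k) (FF M)"
proof -
  let ?M' = "M + Poly_Mapping.single k 1"
  let ?g = "\<lambda>M k acc. tmul (tpow (Tu k) (Poly_Mapping.lookup M k)) acc"
  have lk: "Poly_Mapping.lookup ?M' j = Poly_Mapping.lookup M j + (if j = k then 1 else 0)" for j
    by (simp add: lookup_add lookup_single when_def)
  show ?thesis
  proof (cases "k \<in> Poly_Mapping.keys M")
    case False
    then have M0: "Poly_Mapping.lookup M k = 0" by (simp add: in_keys_iff)
    have keys: "Poly_Mapping.keys ?M' = insert k (Poly_Mapping.keys M)"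
      by (simp add: keys_add_nat)
    have "FF ?M' = ?g ?M' k (Finite_Set.fold (?g ?M') tone (Poly_Mapping.keys M))"
      unfolding FF_def keys using False by (simp add: comp_fun_commute_on.fold_insert[OF cfc'])
    also have "Finite_Set.fold (?g ?M') tone (Poly_Mapping.keys M) = Finite_Set.fold (?g M) tone (Poly_Mapping.keys M)"
      by (rule Finite_Set.fold_cong[OF cfc' cfc']) (use False in \<open>auto simp: lookup_add lookup_single when_def fun_eq_iff\<close>)
    finally show ?thesis
      by (simp add: FF_def lookup_add M0 tmul_tone)
  next
    case True
    have keys: "Poly_Mapping.keys ?M' = Poly_Mapping.keys M"
      using True by (auto simp: keys_add_nat)
    have "FF ?M' = ?g ?M' k (Finite_Set.fold (?g ?M') tone (Poly_Mapping.keys M - {k}))"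
      unfolding FF_def keys using True by (simp add: comp_fun_commute_on.fold_rec[OF cfc'])
    also have "Finite_Set.fold (?g ?M') tone (Poly_Mapping.keys M - {k}) = Finite_Set.fold (?g M) tone (Poly_Mapping.keys M - {k})"
      by (rule Finite_Set.fold_cong[OF cfc' cfc']) (auto simp: lookup_add lookup_single when_def fun_eq_iff)
    also have "?g ?M' k (Finite_Set.fold (?g M) tone (Poly_Mapping.keys M - {k}))
        = tmul (Tu k) (?g M k (Finite_Set.fold (?g M) tone (Poly_Mapping.keys M - {k})))"
      by (simp add: lookup_add tmul_assoc)
    also have "?g M k (Finite_Set.fold (?g M) tone (Poly_Mapping.keys M - {k})) = FF M"
      unfolding FF_def using True by (simp add: comp_fun_commute_on.fold_rec[OF cfc'])
    finally show ?thesis .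
  qed
qed

lemma FF_add_Suc0[simp]: "FF (M + Poly_Mapping.single k (Suc 0)) = tmul (Tu k) (FF M)"
  using FF_add by simp

lemma tmul_supp:
  assumes "Poly_Mapping.lookup (tmul A B m n) e \<noteq> 0"
  shows "\<exists>q r j e1 e2. q + r = m \<and> j \<le> n \<and> e1 + e2 = e \<and> Poly_Mapping.lookup (A q j) e1 \<noteq> 0
            \<and> Poly_Mapping.lookup (B r (n - j)) e2 \<noteq> 0"
proof -
  have "(\<Sum>p\<in>{(q, r). q + r = m}. \<Sum>j\<le>n. Poly_Mapping.lookup (A (fst p) j * B (snd p) (n - j)) e) \<noteq> 0"
    using assms by (simp add: tmul_def lookup_sum case_prod_beta)
  then obtain p where p: "p \<in> {(q, r). q + r = m}" and
    "(\<Sum>j\<le>n. Poly_Mapping.lookup (A (fst p) j * B (snd p) (n - j)) e) \<noteq> 0"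
    by (meson sum.not_neutral_contains_not_neutral)
  then obtain j where j: "j \<le> n" and nz: "Poly_Mapping.lookup (A (fst p) j * B (snd p) (n - j)) e \<noteq> 0"
    by (meson atMost_iff sum.not_neutral_contains_not_neutral)
  then have "e \<in> Poly_Mapping.keys (A (fst p) j * B (snd p) (n - j))" by (simp add: in_keys_iff)
  then obtain e1 e2 where "e = e1 + e2" "e1 \<in> Poly_Mapping.keys (A (fst p) j)" "e2 \<in> Poly_Mapping.keys (B (snd p) (n - j))"
    using keys_mult by blast
  then show ?thesis using p j by (intro exI[of _ "fst p"] exI[of _ "snd p"] exI[of _ j] exI[of _ e1] exI[of _ e2])
      (auto simp: in_keys_iff)
qed

definition mom :: "pmono \<Rightarrow> int \<times> int" where
  "mom m = (lin fst m, lin snd m)"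

lemma mom_add: "mom (a + b) = mom a + mom b"
  by (simp add: mom_def lin_add)

lemma mom_single: "mom (Poly_Mapping.single ab 1) = ab"
  unfolding mom_def lin_single by simp

lemma mom_single_Suc0[simp]: "mom (Poly_Mapping.single ab (Suc 0)) = ab"
  using mom_single by simp

lemma FF_supp:
  "Poly_Mapping.lookup (FF N m n) e \<noteq> 0 \<Longrightarrow> n = 0 \<and> pdeg m = udeg N \<and> e = mom m"
proof (induction N arbitrary: m n e rule: pm_induct)
  case zero
  then have "m = 0" "n = 0" "e = 0"
    by (auto simp: FF_0 tone_def lookup_one when_def split: if_splits)
  then show ?case by (simp add: pdeg_lin udeg_lin mom_def zero_prod_def)
next
  case (step M k)
  from step.prems obtain q r j e1 e2 where qr: "q + r = m" "j \<le> n" "e1 + e2 = e"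
    and A: "Poly_Mapping.lookup (Tu k q j) e1 \<noteq> 0" and B: "Poly_Mapping.lookup (FF M r (n - j)) e2 \<noteq> 0"
    unfolding FF_add using tmul_supp by blast
  from A have "Tu k q j \<noteq> 0" by auto
  then obtain ab where j0: "j = 0" and q: "q = Poly_Mapping.single ab 1" using Tu_zero by blast
  have e1: "e1 = ab" using A unfolding q j0 Tu_single by (auto simp: lookup_single when_def split: if_splits)
  from step.IH[OF B] have IH: "n - j = 0" "pdeg r = udeg M" "e2 = mom r" by auto
  show ?case
  proof (intro conjI)
    show "n = 0" using IH j0 by simp
    show "pdeg m = udeg (M + Poly_Mapping.single k 1)"
      using IH(2) unfolding qr(1)[symmetric] q by (simp add: pdeg_lin udeg_lin lin_add lin_single)
    show "e = mom m"
      unfolding qr(1)[symmetric] qr(3)[symmetric] q e1 IH(3) by (simp add: mom_add mom_single)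
  qed
qed

abbreviation e1 :: "'a \<Rightarrow> 'a \<Rightarrow>\<^sub>0 nat" where "e1 j \<equiv> Poly_Mapping.single j 1"

lemma lin_cong: "(\<And>j. j \<in> Poly_Mapping.keys M \<Longrightarrow> \<phi> j = \<psi> j) \<Longrightarrow> lin \<phi> M = lin \<psi> M"
  unfolding lin_def by (rule sum.cong) auto

lemma lin_add_single: "lin \<phi> (M + e1 k) = lin \<phi> M + \<phi> k"
  by (simp only: lin_add lin_single)

lemma pm_shift:
  assumes "0 < Poly_Mapping.lookup (M :: 'a \<Rightarrow>\<^sub>0 nat) j"
  shows "M + e1 k - e1 j + e1 l = M - e1 j + e1 l + e1 k"
  by (rule poly_mapping_eqI) (use assms in \<open>auto simp: lookup_add lookup_minus lookup_single when_def\<close>)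

lemma pm_shift2:
  assumes "0 < Poly_Mapping.lookup (M :: 'a \<Rightarrow>\<^sub>0 nat) j"
  shows "M + e1 k - e1 j = M - e1 j + e1 k"
  by (rule poly_mapping_eqI) (use assms in \<open>auto simp: lookup_add lookup_minus lookup_single when_def\<close>)

lemma lin1_zero: "lin (\<lambda>_. 1::nat) m = 0 \<Longrightarrow> m = 0"
proof -
  assume "lin (\<lambda>_. 1::nat) m = 0"
  then have "\<forall>k\<in>Poly_Mapping.keys m. Poly_Mapping.lookup m k = 0"
    by (simp add: lin_def)
  then have "\<forall>k. Poly_Mapping.lookup m k = 0" by (auto simp: in_keys_iff)
  then show "m = 0" by (intro poly_mapping_eqI) simp
qed

definition Wd :: "(pmono \<Rightarrow> complex) \<Rightarrow> tseries \<Rightarrow> tseries" where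
  "Wd w F = (\<lambda>m n. Poly_Mapping.single 0 (w m) * F m n)"

lemma Wd_tmul:
  assumes add: "\<And>q r. w (q + r) = w q + w r"
  shows "Wd w (tmul F G) m n = tmul (Wd w F) G m n + tmul F (Wd w G) m n"
proof -
  let ?D = "{(q, r). q + r = m}"
  have eq: "Poly_Mapping.single 0 (w m) * (F (fst p) j * G (snd p) (n - j)) =
      Poly_Mapping.single 0 (w (fst p)) * F (fst p) j * G (snd p) (n - j) + F (fst p) j * (Poly_Mapping.single 0 (w (snd p)) * G (snd p) (n - j))"
    if "p \<in> ?D" for p j
  proof -
    have "w m = w (fst p) + w (snd p)" using that add by auto
    then show ?thesis by (simp add: single_add algebra_simps)
  qed
  have "Wd w (tmul F G) m n = (\<Sum>p\<in>?D. \<Sum>j\<le>n. Poly_Mapping.single 0 (w m) * (F (fst p) j * G (snd p) (n - j)))"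
    by (simp add: Wd_def tmul_def sum_distrib_left case_prod_beta)
  also have "\<dots> = (\<Sum>p\<in>?D. \<Sum>j\<le>n. Poly_Mapping.single 0 (w (fst p)) * F (fst p) j * G (snd p) (n - j) + F (fst p) j * (Poly_Mapping.single 0 (w (snd p)) * G (snd p) (n - j)))"
    by (rule sum.cong[OF refl], rule sum.cong[OF refl], erule eq)
  also have "\<dots> = tmul (Wd w F) G m n + tmul F (Wd w G) m n"
    by (simp add: Wd_def tmul_def sum.distrib case_prod_beta mult.assoc)
  finally show ?thesis .
qed

lemma Wd_Tu:
  assumes "\<And>ab. w (e1 ab) * cc k ab = cc k' ab"
  shows "Wd w (Tu k) = Tu k'"
proof (intro ext)
  fix m n
  show "Wd w (Tu k) m n = Tu k' m n"
  proof (cases "n = 0 \<and> (\<exists>ab. m = e1 ab)")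
    case True
    then obtain ab where n: "n = 0" and m: "m = e1 ab" by blast
    have "Poly_Mapping.single 0 (w (e1 ab)) * Poly_Mapping.single ab (cc k ab) = Poly_Mapping.single ab (cc k' ab)"
      by (simp only: mult_single add.left_neutral assms)
    then show ?thesis unfolding Wd_def m n Tu_single .
  next
    case False
    then show ?thesis by (simp add: Wd_def Tu_zero)
  qed
qed

lemma Wd_FF:
  assumes add: "\<And>q r. w (q + r) = w q + w r"
    and WT: "\<And>k. Wd w (Tu k) = Tu (\<sigma> k)"
  shows "Wd w (FF N) m n = lin (\<lambda>j. FF (N - e1 j + e1 (\<sigma> j)) m n) N"
proof (induction N arbitrary: m n rule: pm_induct)
  case zero
  have w0: "w 0 = 0" using add[of 0 0] by simp
  show ?case by (simp add: FF_0 Wd_def tone_def w0)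
next
  case (step M k)
  have IH: "Wd w (FF M) = (\<lambda>m n. lin (\<lambda>j. FF (M - e1 j + e1 (\<sigma> j)) m n) M)"
    using step.IH by (intro ext)
  have "Wd w (FF (M + e1 k)) m n = tmul (Tu (\<sigma> k)) (FF M) m n + tmul (Tu k) (Wd w (FF M)) m n"
    unfolding FF_add Wd_tmul[OF add] WT ..
  also have "tmul (Tu (\<sigma> k)) (FF M) = FF (M + e1 (\<sigma> k))" by (rule FF_add[symmetric])
  also have "tmul (Tu k) (Wd w (FF M)) m n = lin (\<lambda>j. tmul (Tu k) (FF (M - e1 j + e1 (\<sigma> j))) m n) M"
    unfolding IH lin_def by (rule tmul_sum_right)
  also have "\<dots> = lin (\<lambda>j. FF (M - e1 j + e1 (\<sigma> j) + e1 k) m n) M"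
    unfolding FF_add[symmetric] ..
  also have "\<dots> = lin (\<lambda>j. FF (M + e1 k - e1 j + e1 (\<sigma> j)) m n) M"
  proof (rule lin_cong)
    fix j assume "j \<in> Poly_Mapping.keys M"
    then have pos: "0 < Poly_Mapping.lookup M j" by (simp add: in_keys_iff)
    show "FF (M - e1 j + e1 (\<sigma> j) + e1 k) m n = FF (M + e1 k - e1 j + e1 (\<sigma> j)) m n"
      by (simp only: pm_shift[OF pos])
  qed
  finally show ?case
    by (simp only: lin_add_single add_diff_cancel_right' add.commute)
qed

definition Dpt :: "int \<times> int \<Rightarrow> tseries \<Rightarrow> tseries" where
  "Dpt ab F = (\<lambda>m n. of_nat (Poly_Mapping.lookup m ab + 1) * F (m + Poly_Mapping.single ab 1) n)"

lemma Dpt_half1: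
  "tmul (Dpt ab F) G m n = (\<Sum>p\<in>{(q, r). q + r = m + e1 ab}. of_nat (Poly_Mapping.lookup (fst p) ab) * (\<Sum>j\<le>n. F (fst p) j * G (snd p) (n - j)))"
proof -
  let ?e = "e1 ab"
  let ?Phi = "\<lambda>p. \<Sum>j\<le>n. F (fst p) j * G (snd p) (n - j)"
  let ?S = "{p \<in> {(q, r). q + r = m + ?e}. 0 < Poly_Mapping.lookup (fst p) ab}"
  have "tmul (Dpt ab F) G m n = (\<Sum>p\<in>{(q, r). q + r = m}. of_nat (Poly_Mapping.lookup (fst p) ab + 1) * ?Phi (fst p + ?e, snd p))"
    by (simp add: tmul_def Dpt_def case_prod_beta sum_distrib_left mult.assoc)
  also have "\<dots> = (\<Sum>p\<in>?S. of_nat (Poly_Mapping.lookup (fst p) ab) * ?Phi p)"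
  proof (rule sum.reindex_bij_witness[of _ "\<lambda>p. (fst p - ?e, snd p)" "\<lambda>p. (fst p + ?e, snd p)"])
    fix a :: "pmono \<times> pmono" assume a: "a \<in> {(q, r). q + r = m}"
    show "(fst (fst a + ?e, snd a) - ?e, snd (fst a + ?e, snd a)) = a" by simp
    have "fst a + ?e + snd a = m + ?e" using a by (auto simp: ac_simps)
    moreover have "0 < Poly_Mapping.lookup (fst a + ?e) ab" by (simp add: lookup_add)
    ultimately show "(fst a + ?e, snd a) \<in> ?S" by simp
    show "of_nat (Poly_Mapping.lookup (fst (fst a + ?e, snd a)) ab) * ?Phi (fst a + ?e, snd a)
        = of_nat (Poly_Mapping.lookup (fst a) ab + 1) * ?Phi (fst a + ?e, snd a)"
      by (simp add: lookup_add)
  next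
    fix b :: "pmono \<times> pmono" assume b: "b \<in> ?S"
    then have pos: "0 < Poly_Mapping.lookup (fst b) ab" and sb: "fst b + snd b = m + ?e" by auto
    show "(fst (fst b - ?e, snd b) + ?e, snd (fst b - ?e, snd b)) = b"
      using sub_add_single[OF pos] by simp
    have "fst b - ?e + snd b + ?e = (fst b - ?e + ?e) + snd b" by (simp only: ac_simps)
    also have "\<dots> = m + ?e" by (simp only: sub_add_single[OF pos] sb)
    finally have "fst b - ?e + snd b + ?e = m + ?e" .
    then have "fst b - ?e + snd b = m" by simp
    then show "(fst b - ?e, snd b) \<in> {(q, r). q + r = m}" by simp
  qed
  also have "\<dots> = (\<Sum>p\<in>{(q, r). q + r = m + ?e}. of_nat (Poly_Mapping.lookup (fst p) ab) * ?Phi p)"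
    by (rule sum.mono_neutral_left) (auto simp: finite_decomp_pm)
  finally show ?thesis .
qed

lemma Dpt_half2:
  "tmul F (Dpt ab G) m n = (\<Sum>p\<in>{(q, r). q + r = m + e1 ab}. of_nat (Poly_Mapping.lookup (snd p) ab) * (\<Sum>j\<le>n. F (fst p) j * G (snd p) (n - j)))"
proof -
  let ?e = "e1 ab"
  let ?Phi = "\<lambda>p. \<Sum>j\<le>n. F (fst p) j * G (snd p) (n - j)"
  let ?S = "{p \<in> {(q, r). q + r = m + ?e}. 0 < Poly_Mapping.lookup (snd p) ab}"
  have "tmul F (Dpt ab G) m n = (\<Sum>p\<in>{(q, r). q + r = m}. of_nat (Poly_Mapping.lookup (snd p) ab + 1) * ?Phi (fst p, snd p + ?e))"
    by (simp add: tmul_def Dpt_def case_prod_beta sum_distrib_left mult.left_commute)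
  also have "\<dots> = (\<Sum>p\<in>?S. of_nat (Poly_Mapping.lookup (snd p) ab) * ?Phi p)"
  proof (rule sum.reindex_bij_witness[of _ "\<lambda>p. (fst p, snd p - ?e)" "\<lambda>p. (fst p, snd p + ?e)"])
    fix a :: "pmono \<times> pmono" assume a: "a \<in> {(q, r). q + r = m}"
    show "(fst (fst a, snd a + ?e), snd (fst a, snd a + ?e) - ?e) = a" by simp
    have "fst a + (snd a + ?e) = m + ?e" using a by (auto simp: ac_simps)
    moreover have "0 < Poly_Mapping.lookup (snd a + ?e) ab" by (simp add: lookup_add)
    ultimately show "(fst a, snd a + ?e) \<in> ?S" by simp
    show "of_nat (Poly_Mapping.lookup (snd (fst a, snd a + ?e)) ab) * ?Phi (fst a, snd a + ?e)
        = of_nat (Poly_Mapping.lookup (snd a) ab + 1) * ?Phi (fst a, snd a + ?e)"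
      by (simp add: lookup_add)
  next
    fix b :: "pmono \<times> pmono" assume b: "b \<in> ?S"
    then have pos: "0 < Poly_Mapping.lookup (snd b) ab" and sb: "fst b + snd b = m + ?e" by auto
    show "(fst (fst b, snd b - ?e), snd (fst b, snd b - ?e) + ?e) = b"
      using sub_add_single[OF pos] by simp
    have "fst b + (snd b - ?e) + ?e = fst b + (snd b - ?e + ?e)" by (simp only: add.assoc)
    also have "\<dots> = m + ?e" by (simp only: sub_add_single[OF pos] sb)
    finally have "fst b + (snd b - ?e) + ?e = m + ?e" .
    then have "fst b + (snd b - ?e) = m" by simp
    then show "(fst b, snd b - ?e) \<in> {(q, r). q + r = m}" by simp
  qed
  also have "\<dots> = (\<Sum>p\<in>{(q, r). q + r = m + ?e}. of_nat (Poly_Mapping.lookup (snd p) ab) * ?Phi p)"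
    by (rule sum.mono_neutral_left) (auto simp: finite_decomp_pm)
  finally show ?thesis .
qed

lemma Dpt_tmul: "Dpt ab (tmul F G) m n = tmul (Dpt ab F) G m n + tmul F (Dpt ab G) m n"
proof -
  let ?e = "e1 ab"
  let ?Phi = "\<lambda>p. \<Sum>j\<le>n. F (fst p) j * G (snd p) (n - j)"
  let ?D = "{(q, r). q + r = m + ?e}"
  have "Dpt ab (tmul F G) m n = (\<Sum>p\<in>?D. of_nat (Poly_Mapping.lookup m ab + 1) * ?Phi p)"
    by (simp add: Dpt_def tmul_def sum_distrib_left case_prod_beta)
  also have "\<dots> = (\<Sum>p\<in>?D. of_nat (Poly_Mapping.lookup (fst p) ab) * ?Phi p + of_nat (Poly_Mapping.lookup (snd p) ab) * ?Phi p)"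
  proof (rule sum.cong[OF refl])
    fix p assume "p \<in> ?D"
    then have "fst p + snd p = m + ?e" by auto
    then have "Poly_Mapping.lookup (fst p + snd p) ab = Poly_Mapping.lookup (m + ?e) ab" by simp
    then have "Poly_Mapping.lookup (fst p) ab + Poly_Mapping.lookup (snd p) ab = Poly_Mapping.lookup m ab + 1"
      by (simp add: lookup_add)
    then have "(of_nat (Poly_Mapping.lookup m ab + 1) :: lpoly) = of_nat (Poly_Mapping.lookup (fst p) ab) + of_nat (Poly_Mapping.lookup (snd p) ab)"
      by (simp only: of_nat_add[symmetric])
    then show "of_nat (Poly_Mapping.lookup m ab + 1) * ?Phi p = of_nat (Poly_Mapping.lookup (fst p) ab) * ?Phi p + of_nat (Poly_Mapping.lookup (snd p) ab) * ?Phi p"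
      by (simp only: distrib_right)
  qed
  also have "\<dots> = tmul (Dpt ab F) G m n + tmul F (Dpt ab G) m n"
    unfolding Dpt_half1 Dpt_half2 by (rule sum.distrib)
  finally show ?thesis .
qed

lemma Dpt_Tu: "Dpt ab (Tu k) = (\<lambda>m n. if m = 0 \<and> n = 0 then Poly_Mapping.single ab (cc k ab) else 0)"
proof (intro ext)
  fix m n
  show "Dpt ab (Tu k) m n = (if m = 0 \<and> n = 0 then Poly_Mapping.single ab (cc k ab) else 0)"
  proof (cases "m = 0 \<and> n = 0")
    case True
    then show ?thesis by (simp add: Dpt_def)
  next
    case False
    have "Tu k (m + e1 ab) n = 0"
    proof (rule Tu_zero, rule notI)
      assume a: "n = 0 \<and> (\<exists>c. m + e1 ab = e1 c)"
      then obtain c where c: "m + e1 ab = e1 c" by blast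
      have "lin (\<lambda>_. 1::nat) (m + e1 ab) = lin (\<lambda>_. 1::nat) (e1 c)" by (simp only: c)
      then have "lin (\<lambda>_. 1::nat) m = 0" by (simp only: lin_add lin_single)
      then have "m = 0" by (rule lin1_zero)
      with a False show False by simp
    qed
    then show ?thesis using False by (auto simp: Dpt_def)
  qed
qed

lemma Dpt_FF: "Dpt ab (FF N) m n = lin (\<lambda>j. Poly_Mapping.single ab (cc j ab) * FF (N - e1 j) m n) N"
proof (induction N arbitrary: m n rule: pm_induct)
  case zero
  have "m + e1 ab \<noteq> 0"
  proof
    assume "m + e1 ab = 0"
    then have "Poly_Mapping.lookup (m + e1 ab) ab = 0" by simp
    then show False by (simp add: lookup_add)
  qed
  then show ?case by (simp add: FF_0 Dpt_def tone_def)
next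
  case (step M k)
  have IH: "Dpt ab (FF M) = (\<lambda>m n. \<Sum>j\<in>Poly_Mapping.keys M. (of_nat (Poly_Mapping.lookup M j) * Poly_Mapping.single ab (cc j ab)) * FF (M - e1 j) m n)"
    using step.IH by (intro ext) (simp add: lin_def mult.assoc)
  have "Dpt ab (FF (M + e1 k)) m n = tmul (Dpt ab (Tu k)) (FF M) m n + tmul (Tu k) (Dpt ab (FF M)) m n"
    unfolding FF_add Dpt_tmul ..
  also have "tmul (Dpt ab (Tu k)) (FF M) m n = Poly_Mapping.single ab (cc k ab) * FF M m n"
    unfolding Dpt_Tu by (rule tmul_delta)
  also have "tmul (Tu k) (Dpt ab (FF M)) m n = (\<Sum>j\<in>Poly_Mapping.keys M. (of_nat (Poly_Mapping.lookup M j) * Poly_Mapping.single ab (cc j ab)) * tmul (Tu k) (FF (M - e1 j)) m n)"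
    unfolding IH by (rule tmul_sum_right)
  also have "\<dots> = lin (\<lambda>j. Poly_Mapping.single ab (cc j ab) * FF (M - e1 j + e1 k) m n) M"
    unfolding FF_add[symmetric] lin_def by (simp add: mult.assoc)
  also have "\<dots> = lin (\<lambda>j. Poly_Mapping.single ab (cc j ab) * FF (M + e1 k - e1 j) m n) M"
  proof (rule lin_cong)
    fix j assume "j \<in> Poly_Mapping.keys M"
    then have pos: "0 < Poly_Mapping.lookup M j" by (simp add: in_keys_iff)
    show "Poly_Mapping.single ab (cc j ab) * FF (M - e1 j + e1 k) m n = Poly_Mapping.single ab (cc j ab) * FF (M + e1 k - e1 j) m n"
      by (simp only: pm_shift2[OF pos])
  qed
  finally show ?case
    by (simp only: lin_add_single add_diff_cancel_right' add.commute)
qed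

definition tt :: "umono \<Rightarrow> pmono \<Rightarrow> int \<times> int \<Rightarrow> complex" where
  "tt N m e = Poly_Mapping.lookup (FF N m 0) e"

lemma lookup_of_nat_mult: "Poly_Mapping.lookup (of_nat c * (X :: lpoly)) e = of_nat c * Poly_Mapping.lookup X e"
  by (simp add: single_of_nat[symmetric] lookup_single_mult del: single_of_nat)

lemma lookup_lin: "Poly_Mapping.lookup (lin \<phi> N) (e :: int \<times> int) = lin (\<lambda>j. Poly_Mapping.lookup (\<phi> j :: lpoly) e) N"
  by (simp add: lin_def lookup_sum lookup_of_nat_mult)

lemma shift_tt:
  assumes add: "\<And>q r. w (q + r) = w q + w r"
    and WT: "\<And>k. Wd w (Tu k) = Tu (\<sigma> k)"
  shows "lin (\<lambda>j. tt (N - e1 j + e1 (\<sigma> j)) m e) N = w m * tt N m e"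
proof -
  have "Poly_Mapping.lookup (Wd w (FF N) m 0) e = Poly_Mapping.lookup (lin (\<lambda>j. FF (N - e1 j + e1 (\<sigma> j)) m 0) N) e"
    by (simp only: Wd_FF[OF add WT])
  then show ?thesis
    by (simp add: Wd_def lookup_single_mult lookup_lin tt_def)
qed

lemma dp_tt: "of_nat (Poly_Mapping.lookup m ab + 1) * tt N (m + e1 ab) 0 = lin (\<lambda>j. cc j ab * tt (N - e1 j) m (- ab)) N"
proof -
  have "Poly_Mapping.lookup (Dpt ab (FF N) m 0) 0 = Poly_Mapping.lookup (lin (\<lambda>j. Poly_Mapping.single ab (cc j ab) * FF (N - e1 j) m 0) N) 0"
    by (simp only: Dpt_FF)
  then show ?thesis
    unfolding Dpt_def lookup_of_nat_mult lookup_lin lookup_single_mult tt_def by simp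
qed

definition wx :: "pmono \<Rightarrow> complex" where "wx m = \<i> * of_int (lin snd m)"
definition wy :: "pmono \<Rightarrow> complex" where "wy m = \<i> * of_int (lin fst m)"

lemma wx_add: "wx (q + r) = wx q + wx r"
  by (simp add: wx_def lin_add distrib_left)

lemma wy_add: "wy (q + r) = wy q + wy r"
  by (simp add: wy_def lin_add distrib_left)

lemma Wd_Tu_x: "Wd wx (Tu k) = Tu (fst k + 1, snd k)"
  by (rule Wd_Tu) (simp add: wx_def cc_def lin_single)

lemma Wd_Tu_y: "Wd wy (Tu k) = Tu (fst k, snd k + 1)"
  by (rule Wd_Tu) (simp add: wy_def cc_def lin_single)

lemma tt_supp: "tt N m e \<noteq> 0 \<Longrightarrow> pdeg m = udeg N \<and> e = mom m"
  unfolding tt_def using FF_supp by blast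

lemma shift_tt_x:
  "lin (\<lambda>j. tt (N - e1 j + e1 (fst j + 1, snd j)) m e) N = (\<i> * of_int (snd e)) * tt N m e"
proof -
  have "lin (\<lambda>j. tt (N - e1 j + e1 (fst j + 1, snd j)) m e) N = wx m * tt N m e"
    by (rule shift_tt[OF wx_add Wd_Tu_x])
  also have "\<dots> = (\<i> * of_int (snd e)) * tt N m e"
  proof (cases "tt N m e = 0")
    case False
    then have "e = mom m" using tt_supp by blast
    then show ?thesis by (simp add: wx_def mom_def)
  qed simp
  finally show ?thesis .
qed

lemma shift_tt_y:
  "lin (\<lambda>j. tt (N - e1 j + e1 (fst j, snd j + 1)) m e) N = (\<i> * of_int (fst e)) * tt N m e"
proof -
  have "lin (\<lambda>j. tt (N - e1 j + e1 (fst j, snd j + 1)) m e) N = wy m * tt N m e"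
    by (rule shift_tt[OF wy_add Wd_Tu_y])
  also have "\<dots> = (\<i> * of_int (fst e)) * tt N m e"
  proof (cases "tt N m e = 0")
    case False
    then have "e = mom m" using tt_supp by blast
    then show ?thesis by (simp add: wy_def mom_def)
  qed simp
  finally show ?thesis .
qed

lemma T_tt: "T h m n e = (\<Sum>\<^sub>\<infinity>N. h N n * tt N m e)"
  by (simp add: T_def Tmono_FF tt_def)

lemma T_fin:
  assumes "finite S" "\<And>N. h N n \<noteq> 0 \<Longrightarrow> udeg N = pdeg m \<Longrightarrow> N \<in> S"
  shows "T h m n e = (\<Sum>N\<in>S. h N n * tt N m e)"
  unfolding T_tt
proof (rule infsum_fin)
  show "finite S" by fact
  fix N assume "h N n * tt N m e \<noteq> 0"
  then have "h N n \<noteq> 0" "tt N m e \<noteq> 0" by auto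
  then show "N \<in> S" using assms(2) tt_supp by metis
qed

lemma lin_shift:
  assumes "0 < Poly_Mapping.lookup (M :: 'a \<Rightarrow>\<^sub>0 nat) l"
  shows "lin \<phi> (M - e1 l + e1 k) + \<phi> l = lin \<phi> M + \<phi> k"
  using lin_diff[OF assms, of \<phi>] by (simp only: lin_add lin_single ac_simps)

lemma udeg_shift:
  assumes "0 < Poly_Mapping.lookup M l"
  shows "udeg (M - e1 l + e1 k) = udeg M"
  using lin_shift[OF assms, of "\<lambda>_. 1::nat" k] by (simp add: udeg_lin)

lemma shift_back:
  assumes "0 < Poly_Mapping.lookup (M :: 'a \<Rightarrow>\<^sub>0 nat) l"
  shows "M - e1 l + e1 k - e1 k + e1 l = M"
  using sub_add_single[OF assms] by (simp only: add_sub_single)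

definition Dsh :: "(nat \<times> nat \<Rightarrow> nat \<times> nat) \<Rightarrow> useries \<Rightarrow> useries" where
  "Dsh \<sigma> h = (\<lambda>M n. \<Sum>\<^sub>\<infinity>k. umulvar (\<sigma> k) (du k h) M n)"

lemma dx_Dsh: "dx = Dsh (\<lambda>k. (fst k + 1, snd k))"
  by (simp add: dx_def Dsh_def fun_eq_iff)

lemma dy_Dsh: "dy = Dsh (\<lambda>k. (fst k, snd k + 1))"
  by (simp add: dy_def Dsh_def fun_eq_iff)

lemma umulvar_du: "umulvar l (du k h) M n = (if 0 < Poly_Mapping.lookup M l then
   of_nat (Poly_Mapping.lookup (M - e1 l) k + 1) * h (M - e1 l + e1 k) n else 0)"
  by (simp add: umulvar_def du_def)

lemma Dsh_nz:
  assumes "Dsh \<sigma> h M n \<noteq> 0"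
  shows "\<exists>k. 0 < Poly_Mapping.lookup M (\<sigma> k) \<and> h (M - e1 (\<sigma> k) + e1 k) n \<noteq> 0"
proof (rule ccontr)
  assume neg: "\<not> ?thesis"
  have "umulvar (\<sigma> k) (du k h) M n = 0" for k
  proof -
    from neg have "\<not> (0 < Poly_Mapping.lookup M (\<sigma> k) \<and> h (M - e1 (\<sigma> k) + e1 k) n \<noteq> 0)" by blast
    then show ?thesis by (auto simp: umulvar_du)
  qed
  then have "Dsh \<sigma> h M n = 0" by (simp add: Dsh_def)
  with assms show False by simp
qed

lemma Dsh_ok:
  assumes ok: "useries_ok h"
  shows "useries_ok (Dsh \<sigma> h)"
  unfolding useries_ok_def
proof (intro allI)
  fix d n
  let ?S = "{N. udeg N = d \<and> h N n \<noteq> 0}"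
  have "{M. udeg M = d \<and> Dsh \<sigma> h M n \<noteq> 0} \<subseteq> (\<lambda>(N, j). N - e1 j + e1 (\<sigma> j)) ` (SIGMA N:?S. Poly_Mapping.keys N)"
  proof
    fix M assume "M \<in> {M. udeg M = d \<and> Dsh \<sigma> h M n \<noteq> 0}"
    then have dM: "udeg M = d" and nz: "Dsh \<sigma> h M n \<noteq> 0" by auto
    from Dsh_nz[OF nz] obtain k where pos: "0 < Poly_Mapping.lookup M (\<sigma> k)"
      and hN: "h (M - e1 (\<sigma> k) + e1 k) n \<noteq> 0" by blast
    let ?N = "M - e1 (\<sigma> k) + e1 k"
    have "?N \<in> ?S" using hN udeg_shift[OF pos] dM by simp
    moreover have "k \<in> Poly_Mapping.keys ?N" by (simp add: in_keys_iff lookup_add)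
    moreover have "M = ?N - e1 k + e1 (\<sigma> k)" using shift_back[OF pos] by simp
    ultimately show "M \<in> (\<lambda>(N, j). N - e1 j + e1 (\<sigma> j)) ` (SIGMA N:?S. Poly_Mapping.keys N)"
      by (auto intro!: image_eqI[where x="(?N, k)"])
  qed
  moreover have "finite (SIGMA N:?S. Poly_Mapping.keys N)"
    using ok by (auto simp: useries_ok_def)
  ultimately show "finite {M. udeg M = d \<and> Dsh \<sigma> h M n \<noteq> 0}"
    using finite_subset by blast
qed

lemma T_Dsh:
  assumes ok: "useries_ok h"
    and shift: "\<And>N. lin (\<lambda>j. tt (N - e1 j + e1 (\<sigma> j)) m e) N = c * tt N m e"
  shows "T (Dsh \<sigma> h) m n e = c * T h m n e"
proof -
  let ?S = "{N. udeg N = pdeg m \<and> h N n \<noteq> 0}"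
  let ?P = "SIGMA N:?S. Poly_Mapping.keys N"
  let ?\<rho> = "\<lambda>(N, j). (N - e1 j + e1 (\<sigma> j), j)"
  let ?\<phi> = "\<lambda>M k. umulvar (\<sigma> k) (du k h) M n"
  have finS: "finite ?S" using ok by (simp add: useries_ok_def)
  have finP: "finite ?P" using finS by auto
  have "T (Dsh \<sigma> h) m n e = (\<Sum>\<^sub>\<infinity>M. (\<Sum>\<^sub>\<infinity>k. ?\<phi> M k) * tt M m e)"
    by (simp add: T_tt Dsh_def)
  also have "\<dots> = (\<Sum>\<^sub>\<infinity>M. \<Sum>\<^sub>\<infinity>k. ?\<phi> M k * tt M m e)"
    by (simp add: infsum_cmult_left')
  also have "\<dots> = (\<Sum>(M, k)\<in>?\<rho> ` ?P. ?\<phi> M k * tt M m e)"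
  proof (rule infsum_double)
    show "finite (?\<rho> ` ?P)" using finP by simp
    fix M k assume nz: "?\<phi> M k * tt M m e \<noteq> 0"
    then have t: "tt M m e \<noteq> 0" and p: "?\<phi> M k \<noteq> 0" by auto
    from p have pos: "0 < Poly_Mapping.lookup M (\<sigma> k)" and hN: "h (M - e1 (\<sigma> k) + e1 k) n \<noteq> 0"
      by (auto simp: umulvar_du split: if_splits)
    let ?N = "M - e1 (\<sigma> k) + e1 k"
    have "udeg M = pdeg m" using tt_supp[OF t] by simp
    then have "?N \<in> ?S" using hN udeg_shift[OF pos] by simp
    moreover have "k \<in> Poly_Mapping.keys ?N" by (simp add: in_keys_iff lookup_add)
    moreover have "M = ?N - e1 k + e1 (\<sigma> k)" using shift_back[OF pos] by simp
    ultimately show "(M, k) \<in> ?\<rho> ` ?P"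
      by (auto intro!: image_eqI[where x="(?N, k)"])
  qed
  also have "\<dots> = (\<Sum>(N, j)\<in>?P. ?\<phi> (N - e1 j + e1 (\<sigma> j)) j * tt (N - e1 j + e1 (\<sigma> j)) m e)"
  proof (subst sum.reindex)
    show "inj_on ?\<rho> ?P"
    proof (rule inj_onI)
      fix x y assume x: "x \<in> ?P" and y: "y \<in> ?P" and eq: "?\<rho> x = ?\<rho> y"
      obtain N j where xs: "x = (N, j)" by (cases x)
      obtain N' j' where ys: "y = (N', j')" by (cases y)
      from eq have eqp: "(N - e1 j + e1 (\<sigma> j), j) = (N' - e1 j' + e1 (\<sigma> j'), j')"
        by (simp only: xs ys case_prod_conv)
      then have eq2: "N - e1 j + e1 (\<sigma> j) = N' - e1 j' + e1 (\<sigma> j')" and jj: "j' = j"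
        by (elim Pair_inject; simp only:)+
      from x y have pos: "0 < Poly_Mapping.lookup N j" "0 < Poly_Mapping.lookup N' j"
        by (auto simp: xs ys jj in_keys_iff)
      from eq2 have "N - e1 j = N' - e1 j" unfolding jj by (rule add_right_imp_eq)
      then have "N - e1 j + e1 j = N' - e1 j + e1 j" by (rule arg_cong)
      then have "N = N'" by (simp only: sub_add_single[OF pos(1)] sub_add_single[OF pos(2)])
      then show "x = y" by (simp add: xs ys jj)
    qed
  qed (simp add: case_prod_beta)
  also have "\<dots> = (\<Sum>(N, j)\<in>?P. h N n * (of_nat (Poly_Mapping.lookup N j) * tt (N - e1 j + e1 (\<sigma> j)) m e))"
  proof -
    have key: "?\<phi> (N - e1 j + e1 (\<sigma> j)) j * tt (N - e1 j + e1 (\<sigma> j)) m e =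
        h N n * (of_nat (Poly_Mapping.lookup N j) * tt (N - e1 j + e1 (\<sigma> j)) m e)"
      if j: "j \<in> Poly_Mapping.keys N" for N :: umono and j :: "nat \<times> nat"
    proof -
      from j have pos: "0 < Poly_Mapping.lookup N j" by (simp add: in_keys_iff)
      have a: "0 < Poly_Mapping.lookup (N - e1 j + e1 (\<sigma> j)) (\<sigma> j)" by (simp add: lookup_add)
      have b: "N - e1 j + e1 (\<sigma> j) - e1 (\<sigma> j) = N - e1 j" by (simp only: add_sub_single)
      have c: "Poly_Mapping.lookup (N - e1 j) j + 1 = Poly_Mapping.lookup N j"
        using pos by (simp add: lookup_minus)
      have d: "N - e1 j + e1 j = N" by (rule sub_add_single[OF pos])
      show ?thesis
        unfolding umulvar_du using a by (simp only: if_True b c d) (simp add: ac_simps)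
    qed
    show ?thesis
      by (rule sum.cong[OF refl]) (auto simp only: key mem_Sigma_iff split: prod.splits)
  qed
  also have "\<dots> = (\<Sum>N\<in>?S. h N n * lin (\<lambda>j. tt (N - e1 j + e1 (\<sigma> j)) m e) N)"
    by (subst sum.Sigma[symmetric]) (auto simp: finS lin_def sum_distrib_left)
  also have "\<dots> = (\<Sum>N\<in>?S. c * (h N n * tt N m e))"
    unfolding shift by (simp add: ac_simps)
  also have "\<dots> = c * T h m n e"
    by (simp add: sum_distrib_left[symmetric] T_fin[OF finS])
  finally show ?thesis .
qed

lemma Dsh_pow_ok: "useries_ok h \<Longrightarrow> useries_ok ((Dsh \<sigma> ^^ a) h)"
  by (induction a) (simp_all add: Dsh_ok)

lemma T_Dsh_pow:
  assumes ok: "useries_ok h"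
    and shift: "\<And>N. lin (\<lambda>j. tt (N - e1 j + e1 (\<sigma> j)) m e) N = c * tt N m e"
  shows "T ((Dsh \<sigma> ^^ a) h) m n e = c ^ a * T h m n e"
proof (induction a)
  case 0 then show ?case by simp
next
  case (Suc a)
  have "T ((Dsh \<sigma> ^^ Suc a) h) m n e = c * T ((Dsh \<sigma> ^^ a) h) m n e"
    by (simp add: T_Dsh[OF Dsh_pow_ok[OF ok] shift])
  then show ?case using Suc by simp
qed

definition wt :: "umono \<Rightarrow> nat" where "wt M = lin (\<lambda>k. fst k + snd k) M"

lemma udeg_add_single: "udeg (M + e1 k) = udeg M + 1"
  by (simp only: udeg_lin lin_add lin_single)

lemma wt_add_single: "wt (M + e1 k) = wt M + (fst k + snd k)"
  by (simp only: wt_def lin_add lin_single)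

lemma du_nz: "du k f M n \<noteq> 0 \<Longrightarrow> f (M + e1 k) n \<noteq> 0"
  by (simp add: du_def)

lemma du_ok:
  assumes ok: "useries_ok f"
  shows "useries_ok (du k f)"
  unfolding useries_ok_def
proof (intro allI)
  fix d n
  have "{M. udeg M = d \<and> du k f M n \<noteq> 0} \<subseteq> (\<lambda>N. N - e1 k) ` {N. udeg N = Suc d \<and> f N n \<noteq> 0}"
  proof
    fix M assume "M \<in> {M. udeg M = d \<and> du k f M n \<noteq> 0}"
    then have "udeg M = d" "f (M + e1 k) n \<noteq> 0" using du_nz by auto
    then have "M + e1 k \<in> {N. udeg N = Suc d \<and> f N n \<noteq> 0}" using udeg_add_single[of M k] by simp
    moreover have "M = M + e1 k - e1 k" by (simp only: add_sub_single)
    ultimately show "M \<in> (\<lambda>N. N - e1 k) ` {N. udeg N = Suc d \<and> f N n \<noteq> 0}" by blast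
  qed
  moreover have "finite {N. udeg N = Suc d \<and> f N n \<noteq> 0}" using ok by (simp add: useries_ok_def)
  ultimately show "finite {M. udeg M = d \<and> du k f M n \<noteq> 0}"
    using finite_subset by blast
qed

lemma Dsh_wt:
  assumes \<sigma>w: "\<And>k. fst (\<sigma> k) + snd (\<sigma> k) = fst k + snd k + 1"
    and nz: "Dsh \<sigma> h M n \<noteq> 0"
  shows "\<exists>N. h N n \<noteq> 0 \<and> udeg N = udeg M \<and> wt N + 1 = wt M"
proof -
  from Dsh_nz[OF nz] obtain k where pos: "0 < Poly_Mapping.lookup M (\<sigma> k)"
    and hN: "h (M - e1 (\<sigma> k) + e1 k) n \<noteq> 0" by blast
  have "wt (M - e1 (\<sigma> k) + e1 k) + (fst (\<sigma> k) + snd (\<sigma> k)) = wt M + (fst k + snd k)"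
    unfolding wt_def by (rule lin_shift[OF pos])
  then have "wt (M - e1 (\<sigma> k) + e1 k) + 1 = wt M" using \<sigma>w[of k] by simp
  then show ?thesis using hN udeg_shift[OF pos] by blast
qed

lemma Dsh_pow_wt:
  assumes \<sigma>w: "\<And>k. fst (\<sigma> k) + snd (\<sigma> k) = fst k + snd k + 1"
  shows "(Dsh \<sigma> ^^ a) h M n \<noteq> 0 \<Longrightarrow> \<exists>N. h N n \<noteq> 0 \<and> udeg N = udeg M \<and> wt N + a = wt M"
proof (induction a arbitrary: M)
  case 0 then show ?case by auto
next
  case (Suc a)
  then have "Dsh \<sigma> ((Dsh \<sigma> ^^ a) h) M n \<noteq> 0" by simp
  from Dsh_wt[OF \<sigma>w this] obtain N1 where "(Dsh \<sigma> ^^ a) h N1 n \<noteq> 0" "udeg N1 = udeg M" "wt N1 + 1 = wt M"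
    by blast
  with Suc.IH[of N1] show ?case by fastforce
qed

lemma vard_term_wt:
  assumes nz: "(dx ^^ fst k) ((dy ^^ snd k) (du k f)) M n \<noteq> 0"
  shows "\<exists>N'. f N' n \<noteq> 0 \<and> udeg N' = udeg M + 1 \<and> wt N' = wt M \<and> fst k + snd k \<le> wt M"
proof -
  have sx: "\<And>k::nat\<times>nat. fst (fst k + 1, snd k) + snd (fst k + 1, snd k) = fst k + snd k + 1" by (simp add: algebra_simps)
  have sy: "\<And>k::nat\<times>nat. fst (fst k, snd k + 1) + snd (fst k, snd k + 1) = fst k + snd k + 1" by simp
  from Dsh_pow_wt[OF sx, of "fst k" "(dy ^^ snd k) (du k f)" M n] nz
  obtain N1 where N1: "(dy ^^ snd k) (du k f) N1 n \<noteq> 0" "udeg N1 = udeg M" "wt N1 + fst k = wt M"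
    by (auto simp: dx_Dsh)
  from Dsh_pow_wt[OF sy, of "snd k" "du k f" N1 n] N1(1)
  obtain N2 where N2: "du k f N2 n \<noteq> 0" "udeg N2 = udeg N1" "wt N2 + snd k = wt N1"
    by (auto simp: dy_Dsh)
  have "f (N2 + e1 k) n \<noteq> 0" using du_nz[OF N2(1)] .
  moreover have "udeg (N2 + e1 k) = udeg M + 1" using N1 N2 udeg_add_single[of N2 k] by simp
  moreover have "wt (N2 + e1 k) = wt M" using N1 N2 wt_add_single[of N2 k] by simp
  moreover have "fst k + snd k \<le> wt M" using N1 N2 by simp
  ultimately show ?thesis by blast
qed

lemma finite_udeg_wt: "finite {M :: umono. udeg M = d \<and> wt M \<le> W}"
proof -
  let ?K = "{k :: nat \<times> nat. fst k + snd k \<le> W}"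
  have finK: "finite ?K"
  proof -
    have "?K \<subseteq> {..W} \<times> {..W}" by auto
    then show ?thesis by (rule finite_subset) simp
  qed
  have "{M :: umono. udeg M = d \<and> wt M \<le> W} \<subseteq> {M. Poly_Mapping.keys M \<subseteq> ?K \<and> (\<forall>k. Poly_Mapping.lookup M k \<le> d)}"
  proof (rule subsetI)
    fix M assume "M \<in> {M :: umono. udeg M = d \<and> wt M \<le> W}"
    then have dM: "udeg M = d" and wM: "wt M \<le> W" by auto
    have K: "Poly_Mapping.keys M \<subseteq> ?K"
    proof
      fix k assume k: "k \<in> Poly_Mapping.keys M"
      then have "Poly_Mapping.lookup M k * (fst k + snd k) \<le> wt M"
        unfolding wt_def lin_def of_nat_id by (intro member_le_sum) auto
      moreover have "fst k + snd k \<le> Poly_Mapping.lookup M k * (fst k + snd k)"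
      proof -
        have "1 \<le> Poly_Mapping.lookup M k" using k by (simp add: in_keys_iff)
        then have "1 * (fst k + snd k) \<le> Poly_Mapping.lookup M k * (fst k + snd k)"
          by (rule mult_le_mono1)
        then show ?thesis by simp
      qed
      ultimately have "fst k + snd k \<le> W" using wM by linarith
      then show "k \<in> ?K" by simp
    qed
    have B: "Poly_Mapping.lookup M k \<le> d" for k
    proof (cases "k \<in> Poly_Mapping.keys M")
      case True
      then have "Poly_Mapping.lookup M k \<le> udeg M"
        unfolding udeg_def by (intro member_le_sum) auto
      then show ?thesis using dM by simp
    next
      case False then show ?thesis by (simp add: in_keys_iff)
    qed
    show "M \<in> {M. Poly_Mapping.keys M \<subseteq> ?K \<and> (\<forall>k. Poly_Mapping.lookup M k \<le> d)}"
      using K B by blast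
  qed
  then show ?thesis using finite_bounded_pm[OF finK, of "\<lambda>_. d"] finite_subset by blast
qed

lemma T_vard:
  assumes ok: "useries_ok f"
  shows "T (vard f) m n e = (\<Sum>\<^sub>\<infinity>k. (-1) ^ (fst k + snd k) * T ((dx ^^ fst k) ((dy ^^ snd k) (du k f))) m n e)"
proof -
  let ?a = "\<lambda>M k. (-1) ^ (fst k + snd k) * (dx ^^ fst k) ((dy ^^ snd k) (du k f)) M n"
  let ?S' = "{N. udeg N = Suc (pdeg m) \<and> f N n \<noteq> 0}"
  define W where "W = Max (wt ` ?S')"
  have finS': "finite ?S'" using ok by (simp add: useries_ok_def)
  let ?P = "{M :: umono. udeg M = pdeg m \<and> wt M \<le> W} \<times> {k :: nat \<times> nat. fst k + snd k \<le> W}"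
  have finP: "finite ?P"
  proof -
    have "{k :: nat \<times> nat. fst k + snd k \<le> W} \<subseteq> {..W} \<times> {..W}" by auto
    then have "finite {k :: nat \<times> nat. fst k + snd k \<le> W}" by (rule finite_subset) simp
    then show ?thesis using finite_udeg_wt by blast
  qed
  have "T (vard f) m n e = (\<Sum>\<^sub>\<infinity>M. (\<Sum>\<^sub>\<infinity>k. ?a M k) * tt M m e)"
    by (simp add: T_tt vard_def)
  also have "\<dots> = (\<Sum>\<^sub>\<infinity>M. \<Sum>\<^sub>\<infinity>k. ?a M k * tt M m e)"
    by (simp add: infsum_cmult_left')
  also have "\<dots> = (\<Sum>(M, k)\<in>?P. ?a M k * tt M m e)"
  proof (rule infsum_double[OF finP])
    fix M k assume "?a M k * tt M m e \<noteq> 0"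
    then have t: "tt M m e \<noteq> 0" and a: "(dx ^^ fst k) ((dy ^^ snd k) (du k f)) M n \<noteq> 0" by auto
    have dM: "udeg M = pdeg m" using tt_supp[OF t] by simp
    from vard_term_wt[OF a] obtain N' where N': "f N' n \<noteq> 0" "udeg N' = udeg M + 1" "wt N' = wt M"
      "fst k + snd k \<le> wt M" by blast
    have "N' \<in> ?S'" using N' dM by simp
    then have "wt N' \<le> W" unfolding W_def using finS' by (intro Max_ge) auto
    then show "(M, k) \<in> ?P" using N' dM by simp
  qed
  also have "\<dots> = (\<Sum>\<^sub>\<infinity>k. \<Sum>\<^sub>\<infinity>M. ?a M k * tt M m e)"
  proof (rule infsum_double'[OF finP, symmetric])
    fix M k assume "?a M k * tt M m e \<noteq> 0"
    then have t: "tt M m e \<noteq> 0" and a: "(dx ^^ fst k) ((dy ^^ snd k) (du k f)) M n \<noteq> 0" by auto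
    have dM: "udeg M = pdeg m" using tt_supp[OF t] by simp
    from vard_term_wt[OF a] obtain N' where N': "f N' n \<noteq> 0" "udeg N' = udeg M + 1" "wt N' = wt M"
      "fst k + snd k \<le> wt M" by blast
    have "N' \<in> ?S'" using N' dM by simp
    then have "wt N' \<le> W" unfolding W_def using finS' by (intro Max_ge) auto
    then show "(M, k) \<in> ?P" using N' dM by simp
  qed
  also have "\<dots> = (\<Sum>\<^sub>\<infinity>k. (-1) ^ (fst k + snd k) * T ((dx ^^ fst k) ((dy ^^ snd k) (du k f))) m n e)"
    by (simp add: T_tt mult.assoc infsum_cmult_right')
  finally show ?thesis .
qed

lemma dp_T0:
  assumes ok: "useries_ok f"
  shows "dp ab (T0 f) m n = (\<Sum>\<^sub>\<infinity>k. cc k ab * T (du k f) m n (- ab))"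
proof -
  let ?S' = "{N. udeg N = Suc (pdeg m) \<and> f N n \<noteq> 0}"
  let ?P = "SIGMA N:?S'. Poly_Mapping.keys N"
  let ?\<rho> = "\<lambda>(N, j). (j, N - e1 j)"
  let ?g = "\<lambda>k M. cc k ab * (du k f M n * tt M m (- ab))"
  have finS': "finite ?S'" using ok by (simp add: useries_ok_def)
  have finP: "finite ?P" using finS' by auto
  have "(\<Sum>\<^sub>\<infinity>k. cc k ab * T (du k f) m n (- ab)) = (\<Sum>\<^sub>\<infinity>k. \<Sum>\<^sub>\<infinity>M. ?g k M)"
    by (simp add: T_tt infsum_cmult_right')
  also have "\<dots> = (\<Sum>(k, M)\<in>?\<rho> ` ?P. ?g k M)"
  proof (rule infsum_double)
    show "finite (?\<rho> ` ?P)" using finP by simp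
    fix k M assume "?g k M \<noteq> 0"
    then have t: "tt M m (- ab) \<noteq> 0" and d: "du k f M n \<noteq> 0" by auto
    have dM: "udeg M = pdeg m" using tt_supp[OF t] by simp
    have fN: "f (M + e1 k) n \<noteq> 0" by (rule du_nz[OF d])
    have "udeg (M + e1 k) = Suc (pdeg m)" using dM udeg_add_single[of M k] by simp
    moreover have "k \<in> Poly_Mapping.keys (M + e1 k)" by (simp add: in_keys_iff lookup_add)
    ultimately have mem: "(M + e1 k, k) \<in> ?P" using fN by simp
    have eq: "(k, M) = ?\<rho> (M + e1 k, k)" by (simp only: case_prod_conv add_sub_single)
    show "(k, M) \<in> ?\<rho> ` ?P" by (rule image_eqI[of "(k, M)" ?\<rho> "(M + e1 k, k)" ?P, OF eq mem])
  qed
  also have "\<dots> = (\<Sum>(N, j)\<in>?P. ?g j (N - e1 j))"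
  proof (subst sum.reindex)
    show "inj_on ?\<rho> ?P"
    proof (rule inj_onI)
      fix x y assume x: "x \<in> ?P" and y: "y \<in> ?P" and eq: "?\<rho> x = ?\<rho> y"
      obtain N j where xs: "x = (N, j)" by (cases x)
      obtain N' j' where ys: "y = (N', j')" by (cases y)
      from eq have eqp: "(j, N - e1 j) = (j', N' - e1 j')"
        by (simp only: xs ys case_prod_conv)
      then have eq2: "N - e1 j = N' - e1 j'" and jj: "j' = j"
        by (elim Pair_inject; simp only:)+
      from x y have pos: "0 < Poly_Mapping.lookup N j" "0 < Poly_Mapping.lookup N' j"
        by (auto simp: xs ys jj in_keys_iff)
      from eq2 have "N - e1 j + e1 j = N' - e1 j + e1 j" unfolding jj by (rule arg_cong)
      then have "N = N'" by (simp only: sub_add_single[OF pos(1)] sub_add_single[OF pos(2)])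
      then show "x = y" by (simp add: xs ys jj)
    qed
  qed (simp add: case_prod_beta)
  also have "\<dots> = (\<Sum>(N, j)\<in>?P. f N n * (of_nat (Poly_Mapping.lookup N j) * (cc j ab * tt (N - e1 j) m (- ab))))"
  proof -
    have key: "?g j (N - e1 j) = f N n * (of_nat (Poly_Mapping.lookup N j) * (cc j ab * tt (N - e1 j) m (- ab)))"
      if j: "j \<in> Poly_Mapping.keys N" for N :: umono and j :: "nat \<times> nat"
    proof -
      from j have pos: "0 < Poly_Mapping.lookup N j" by (simp add: in_keys_iff)
      have c: "Poly_Mapping.lookup (N - e1 j) j + 1 = Poly_Mapping.lookup N j"
        using pos by (simp add: lookup_minus)
      have d: "N - e1 j + e1 j = N" by (rule sub_add_single[OF pos])
      show ?thesis
        unfolding du_def by (simp only: c d) (simp add: ac_simps)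
    qed
    show ?thesis
      by (rule sum.cong[OF refl]) (auto simp only: key mem_Sigma_iff split: prod.splits)
  qed
  also have "\<dots> = (\<Sum>N\<in>?S'. f N n * lin (\<lambda>j. cc j ab * tt (N - e1 j) m (- ab)) N)"
    by (subst sum.Sigma[symmetric]) (auto simp: finS' lin_def sum_distrib_left)
  also have "\<dots> = (\<Sum>N\<in>?S'. of_nat (Poly_Mapping.lookup m ab + 1) * (f N n * tt N (m + e1 ab) 0))"
    unfolding dp_tt[symmetric] by (simp add: ac_simps)
  also have "\<dots> = of_nat (Poly_Mapping.lookup m ab + 1) * T f (m + e1 ab) n 0"
  proof -
    have "pdeg (m + e1 ab) = Suc (pdeg m)"
      by (simp only: pdeg_lin lin_add lin_single Suc_eq_plus1)
    then have "T f (m + e1 ab) n 0 = (\<Sum>N\<in>?S'. f N n * tt N (m + e1 ab) 0)"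
      by (intro T_fin[OF finS']) simp
    then show ?thesis by (simp add: sum_distrib_left)
  qed
  also have "\<dots> = dp ab (T0 f) m n"
    by (simp add: dp_def T0_def zero_prod_def)
  finally show ?thesis by simp
qed

theorem lemma5p1:
  fixes f :: useries and g :: "pmono \<Rightarrow> nat \<Rightarrow> complex"
  assumes "useries_ok f" and "T0 f = g"
  shows "T (vard f) =
    (\<lambda>m n e. \<Sum>\<^sub>\<infinity>ab. (if e = - ab then dp ab g m n else 0))"
proof (intro ext)
  fix m n e
  have RHS: "(\<Sum>\<^sub>\<infinity>ab. (if e = - ab then dp ab g m n else 0)) = dp (- e) g m n"
  proof -
    have "(\<Sum>\<^sub>\<infinity>ab. (if e = - ab then dp ab g m n else 0)) = (\<Sum>ab\<in>{- e}. (if e = - ab then dp ab g m n else 0))"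
      by (rule infsum_fin) (auto split: if_splits)
    then show ?thesis by simp
  qed
  have "T (vard f) m n e = (\<Sum>\<^sub>\<infinity>k. (-1) ^ (fst k + snd k) * T ((dx ^^ fst k) ((dy ^^ snd k) (du k f))) m n e)"
    by (rule T_vard[OF assms(1)])
  also have "\<dots> = (\<Sum>\<^sub>\<infinity>k. cc k (- e) * T (du k f) m n (- (- e)))"
  proof (rule infsum_cong)
    fix k :: "nat \<times> nat"
    have okd: "useries_ok (du k f)" by (rule du_ok[OF assms(1)])
    have oky: "useries_ok ((dy ^^ snd k) (du k f))" unfolding dy_Dsh by (rule Dsh_pow_ok[OF okd])
    have A: "T ((dx ^^ fst k) ((dy ^^ snd k) (du k f))) m n e = (\<i> * of_int (snd e)) ^ fst k * T ((dy ^^ snd k) (du k f)) m n e"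
      unfolding dx_Dsh by (rule T_Dsh_pow[OF oky shift_tt_x])
    have B: "T ((dy ^^ snd k) (du k f)) m n e = (\<i> * of_int (fst e)) ^ snd k * T (du k f) m n e"
      unfolding dy_Dsh by (rule T_Dsh_pow[OF okd shift_tt_y])
    obtain al be where e: "e = (al, be)" by (cases e)
    have x: "\<i> * of_int (- be) = (-1) * (\<i> * of_int be)" by simp
    have y: "\<i> * of_int (- al) = (-1) * (\<i> * of_int al)" by simp
    have "(-1) ^ (fst k + snd k) * ((\<i> * of_int be) ^ fst k * (\<i> * of_int al) ^ snd k) = cc k (- e)"
      unfolding cc_def e uminus_Pair fst_conv snd_conv x y power_mult_distrib power_add
      by (simp only: ac_simps)
    then show "(-1) ^ (fst k + snd k) * T ((dx ^^ fst k) ((dy ^^ snd k) (du k f))) m n e = cc k (- e) * T (du k f) m n (- (- e))"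
      unfolding A B by (simp add: e ac_simps)
  qed
  also have "\<dots> = dp (- e) (T0 f) m n"
    by (rule dp_T0[OF assms(1), symmetric])
  finally show "T (vard f) m n e = (\<Sum>\<^sub>\<infinity>ab. (if e = - ab then dp ab g m n else 0))"
    using RHS assms(2) by simp
qed

end
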